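(* Let $x,y\in R=\mathbb{K}[[t]]$ with $v(x)=5$, $v(y)=8$, chosen so that $t=y^2/x^3$, and put $z=y/x$. Let $S_2=\langle 1,x,y,x^2,tx^2\rangle+t^{13}R$. For $\alpha,\beta\in\mathbb{K}$ with $\alpha\neq 0$ let $F_9(\alpha,\beta)=\langle 1,\ z+\alpha t z^2+\beta z^3,\ x,\ y\rangle + t^{10}R$. Then each $F_9(\alpha,\beta)$ is an $S_2$-submodule of $R$, and $F_9(\alpha,\beta)\cong F_9(\alpha',\beta')$ as $S_2$-modules (with $\alpha,\alpha'\ne0$) only if $(\alpha,\beta)=(\alpha',\beta')$.
   Context: $\mathbb{K}$ is an algebraically closed field; $v$ denotes the $t$-adic valuation on $R=\mathbb{K}[[t]]$; $\langle a_1,\dots,a_m\rangle$ denotes the $\mathbb{K}$-linear span of $a_1,\dots,a_m$. *)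

theory Defs
  imports "HOL-Computational_Algebra.Computational_Algebra"
begin

text \<open>R = K[[t]] is rendered as the type 'a fps; t is fps_X; v is subdegree (on nonzero elements).\<close>

definition kspan :: "'a::field fps list \<Rightarrow> 'a fps set" where
  "kspan as = {(\<Sum>i<length as. fps_const (c i) * as ! i) | c. True}"

definition tpowR :: "nat \<Rightarrow> 'a::field fps set" where
  "tpowR n = {fps_X ^ n * r | r. True}"

definition setplus :: "'a::field fps set \<Rightarrow> 'a fps set \<Rightarrow> 'a fps set" where
  "setplus A B = {a + b | a b. a \<in> A \<and> b \<in> B}"

definition S2 :: "'a::field fps \<Rightarrow> 'a fps \<Rightarrow> 'a fps set" where
  "S2 x y = setplus (kspan [1, x, y, x^2, fps_X * x^2]) (tpowR 13)"

definition F9 :: "'a::field fps \<Rightarrow> 'a fps \<Rightarrow> 'a fps \<Rightarrow> 'a \<Rightarrow> 'a \<Rightarrow> 'a fps set" where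
  "F9 x y z \<alpha> \<beta> = setplus
     (kspan [1, z + fps_const \<alpha> * fps_X * z^2 + fps_const \<beta> * z^3, x, y]) (tpowR 10)"

definition is_submodule :: "'a::field fps set \<Rightarrow> 'a fps set \<Rightarrow> bool" where
  "is_submodule S M \<longleftrightarrow> 0 \<in> M \<and> (\<forall>a\<in>M. \<forall>b\<in>M. a + b \<in> M) \<and> (\<forall>a\<in>M. - a \<in> M)
     \<and> (\<forall>s\<in>S. \<forall>a\<in>M. s * a \<in> M)"

definition module_iso :: "'a::field fps set \<Rightarrow> 'a fps set \<Rightarrow> 'a fps set \<Rightarrow> bool" where
  "module_iso S M N \<longleftrightarrow> (\<exists>\<phi>. bij_betw \<phi> M N \<and> (\<forall>a\<in>M. \<forall>b\<in>M. \<phi> (a + b) = \<phi> a + \<phi> b)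
     \<and> (\<forall>s\<in>S. \<forall>a\<in>M. \<phi> (s * a) = s * \<phi> a))"

end

theory Submission
  imports Defs
begin

lemma kspan4: "kspan [p,q,r,s] = {fps_const c0 * p + fps_const c1 * q + fps_const c2 * r + fps_const c3 * s | c0 c1 c2 c3. True}"
proof (rule set_eqI, rule iffI)
  fix m assume "m \<in> kspan [p,q,r,s]"
  then obtain c where "m = (\<Sum>i<length [p,q,r,s]. fps_const (c i) * [p,q,r,s] ! i)" unfolding kspan_def mem_Collect_eq by blast
  then show "m \<in> {fps_const c0 * p + fps_const c1 * q + fps_const c2 * r + fps_const c3 * s | c0 c1 c2 c3. True}"
    by (simp add: eval_nat_numeral lessThan_Suc add_ac) blast
next
  fix m assume "m \<in> {fps_const c0 * p + fps_const c1 * q + fps_const c2 * r + fps_const c3 * s | c0 c1 c2 c3. True}"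
  then obtain c0 c1 c2 c3 where "m = fps_const c0 * p + fps_const c1 * q + fps_const c2 * r + fps_const c3 * s" by auto
  then show "m \<in> kspan [p,q,r,s]" unfolding kspan_def
    by (auto simp: eval_nat_numeral lessThan_Suc add_ac intro!: exI[of _ "\<lambda>i. [c0,c1,c2,c3]!i"])
qed

lemma kspan5: "kspan [p,q,r,s,t] = {fps_const c0 * p + fps_const c1 * q + fps_const c2 * r + fps_const c3 * s + fps_const c4 * t | c0 c1 c2 c3 c4. True}"
proof (rule set_eqI, rule iffI)
  fix m assume "m \<in> kspan [p,q,r,s,t]"
  then obtain c where "m = (\<Sum>i<length [p,q,r,s,t]. fps_const (c i) * [p,q,r,s,t] ! i)" unfolding kspan_def mem_Collect_eq by blast
  then show "m \<in> {fps_const c0 * p + fps_const c1 * q + fps_const c2 * r + fps_const c3 * s + fps_const c4 * t | c0 c1 c2 c3 c4. True}"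
    by (simp add: eval_nat_numeral lessThan_Suc add_ac) blast
next
  fix m assume "m \<in> {fps_const c0 * p + fps_const c1 * q + fps_const c2 * r + fps_const c3 * s + fps_const c4 * t | c0 c1 c2 c3 c4. True}"
  then obtain c0 c1 c2 c3 c4 where "m = fps_const c0 * p + fps_const c1 * q + fps_const c2 * r + fps_const c3 * s + fps_const c4 * t" by auto
  then show "m \<in> kspan [p,q,r,s,t]" unfolding kspan_def
    by (auto simp: eval_nat_numeral lessThan_Suc add_ac intro!: exI[of _ "\<lambda>i. [c0,c1,c2,c3,c4]!i"])
qed

lemma F9_iff: "m \<in> F9 x y z \<alpha> \<beta> \<longleftrightarrow> (\<exists>c0 c1 c2 c3 r. m = fps_const c0 * 1 + fps_const c1 * (z + fps_const \<alpha> * fps_X * z^2 + fps_const \<beta> * z^3) + fps_const c2 * x + fps_const c3 * y + fps_X^10 * r)"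
  unfolding F9_def setplus_def kspan4 tpowR_def mem_Collect_eq by blast

lemma S2_iff: "m \<in> S2 x y \<longleftrightarrow> (\<exists>c0 c1 c2 c3 c4 r. m = fps_const c0 * 1 + fps_const c1 * x + fps_const c2 * y + fps_const c3 * x^2 + fps_const c4 * (fps_X * x^2) + fps_X^13 * r)"
  unfolding S2_def setplus_def kspan5 tpowR_def mem_Collect_eq by blast

lemma factor: assumes "f \<noteq> 0" "subdegree f = n" shows "f = fps_X^n * fps_shift n f"
  by (rule fps_ext) (use assms in \<open>auto simp: fps_X_power_mult_nth nth_less_subdegree_zero\<close>)

lemma coef:
  fixes c q s R :: "'a::field fps"
  assumes c0: "c$0 \<noteq> 0" and q0: "q$0 \<noteq> 0" and s0: "s$0 \<noteq> 0"
  and eq: "fps_const E0 + fps_const E1 * (fps_X^3*c + fps_const a' * (fps_X^7 * q) + fps_const b' * (fps_X^9 * s))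
     + fps_const E2 * (fps_X^5 * q) + fps_const E3 * (fps_X^8 * s) + fps_X^10 * R
     = fps_const e1 * (fps_X^6*q) + fps_const e2 * (fps_X^7 * q) + fps_const e3 * (fps_X^9 * s)"
  shows "e1 = 0 \<and> e2 = 0 \<and> e3 = 0"
proof -
  have h: "\<And>n. (fps_const E0 + fps_const E1 * (fps_X^3*c + fps_const a' * (fps_X^7 * q) + fps_const b' * (fps_X^9 * s))
     + fps_const E2 * (fps_X^5 * q) + fps_const E3 * (fps_X^8 * s) + fps_X^10 * R) $ n
     = (fps_const e1 * (fps_X^6*q) + fps_const e2 * (fps_X^7 * q) + fps_const e3 * (fps_X^9 * s)) $ n"
    using eq by simp
  note ss = fps_X_power_mult_nth
  have "E0 = 0" using h[of 0] by (simp add: ss)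
  moreover have "E1 = 0" using h[of 3] c0 \<open>E0 = 0\<close> by (simp add: ss)
  moreover have "E2 = 0" using h[of 5] q0 calculation by (simp add: ss)
  moreover have "e1 = 0" using h[of 6] q0 calculation by (simp add: ss)
  moreover have "e2 = 0" using h[of 7] q0 calculation by (simp add: ss)
  moreover have "E3 = 0" using h[of 8] s0 calculation by (simp add: ss)
  moreover have "e3 = 0" using h[of 9] s0 calculation by (simp add: ss)
  ultimately show ?thesis by simp
qed

lemmas cs = fps_const_add[symmetric] fps_const_mult[symmetric] fps_const_neg[symmetric] fps_const_sub[symmetric]

lemma core1:
  fixes c x y z :: "'a::field fps"
  assumes xd: "x = fps_X^5*c^2" and yd: "y = fps_X^8*c^3" and zd: "z = fps_X^3*c"
  shows "is_submodule (S2 x y) (F9 x y z \<alpha> \<beta>)"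
  unfolding is_submodule_def
proof (intro conjI ballI)
  show "0 \<in> F9 x y z \<alpha> \<beta>" unfolding F9_iff
    by (rule exI[of _ 0], rule exI[of _ 0], rule exI[of _ 0], rule exI[of _ 0], rule exI[of _ 0]) simp
next
  fix a b assume "a \<in> F9 x y z \<alpha> \<beta>" "b \<in> F9 x y z \<alpha> \<beta>"
  then obtain C0 C1 C2 C3 r D0 D1 D2 D3 r' where
    a: "a = fps_const C0 * 1 + fps_const C1 * (z + fps_const \<alpha> * fps_X * z^2 + fps_const \<beta> * z^3) + fps_const C2 * x + fps_const C3 * y + fps_X^10 * r"
    and b: "b = fps_const D0 * 1 + fps_const D1 * (z + fps_const \<alpha> * fps_X * z^2 + fps_const \<beta> * z^3) + fps_const D2 * x + fps_const D3 * y + fps_X^10 * r'"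
    unfolding F9_iff by blast
  show "a + b \<in> F9 x y z \<alpha> \<beta>" unfolding F9_iff
    apply (rule exI[of _ "C0+D0"], rule exI[of _ "C1+D1"], rule exI[of _ "C2+D2"], rule exI[of _ "C3+D3"], rule exI[of _ "r+r'"])
    unfolding a b cs by algebra
next
  fix a assume "a \<in> F9 x y z \<alpha> \<beta>"
  then obtain C0 C1 C2 C3 r where
    a: "a = fps_const C0 * 1 + fps_const C1 * (z + fps_const \<alpha> * fps_X * z^2 + fps_const \<beta> * z^3) + fps_const C2 * x + fps_const C3 * y + fps_X^10 * r"
    unfolding F9_iff by blast
  show "- a \<in> F9 x y z \<alpha> \<beta>" unfolding F9_iff
    apply (rule exI[of _ "-C0"], rule exI[of _ "-C1"], rule exI[of _ "-C2"], rule exI[of _ "-C3"], rule exI[of _ "-r"])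
    unfolding a cs by algebra
next
  fix s a assume "s \<in> S2 x y" "a \<in> F9 x y z \<alpha> \<beta>"
  then obtain C0 C1 C2 C3 r e0 e1 e2 e3 e4 r' where
    a: "a = fps_const C0 * 1 + fps_const C1 * (z + fps_const \<alpha> * fps_X * z^2 + fps_const \<beta> * z^3) + fps_const C2 * x + fps_const C3 * y + fps_X^10 * r"
    and s: "s = fps_const e0 * 1 + fps_const e1 * x + fps_const e2 * y + fps_const e3 * x^2 + fps_const e4 * (fps_X * x^2) + fps_X^13 * r'"
    unfolding F9_iff S2_iff by blast
  define P where "P = c + fps_const \<alpha> * fps_X^4 * c^2 + fps_const \<beta> * fps_X^6 * c^3"
  define R where "R = fps_const e0 * r
     + fps_const e1 * (fps_const C1 * (fps_const \<alpha> * fps_X^2 * c^4 + fps_const \<beta> * fps_X^4 * c^5) + fps_const C2 * c^4 + fps_const C3 * fps_X^3 * c^5 + x * r)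
     + fps_const e2 * (fps_const C1 * fps_X * c^3 * P + fps_const C2 * fps_X^3 * c^5 + fps_const C3 * fps_X^6 * c^6 + y * r)
     + fps_const e3 * c^4 * a + fps_const e4 * fps_X * c^4 * a + fps_X^3 * r' * a"
  show "s * a \<in> F9 x y z \<alpha> \<beta>" unfolding F9_iff
    apply (rule exI[of _ "e0*C0"], rule exI[of _ "e0*C1"], rule exI[of _ "e0*C2 + e1*C0"], rule exI[of _ "e0*C3 + e2*C0 + e1*C1"], rule exI[of _ "R"])
    unfolding R_def P_def cs unfolding a s xd yd zd by algebra
qed


lemma core2:
  fixes c x y z :: "'a::field fps"
  assumes xd: "x = fps_X^5*c^2" and yd: "y = fps_X^8*c^3" and zd: "z = fps_X^3*c" and c0: "c$0 \<noteq> 0"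
  and iso: "module_iso (S2 x y) (F9 x y z \<alpha> \<beta>) (F9 x y z \<alpha>' \<beta>')"
  shows "\<alpha> = \<alpha>' \<and> \<beta> = \<beta>'"
proof -
  obtain \<phi> where bij: "bij_betw \<phi> (F9 x y z \<alpha> \<beta>) (F9 x y z \<alpha>' \<beta>')"
    and lin: "\<forall>s\<in>S2 x y. \<forall>a\<in>F9 x y z \<alpha> \<beta>. \<phi> (s * a) = s * \<phi> a"
    using iso unfolding module_iso_def by blast
  have X13: "fps_X^13 * r \<in> S2 x y" for r unfolding S2_iff
    by (rule exI[of _ 0], rule exI[of _ 0], rule exI[of _ 0], rule exI[of _ 0], rule exI[of _ 0], rule exI[of _ r]) simp
  have one: "1 \<in> F9 x y z \<alpha> \<beta>" unfolding F9_iff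
    by (rule exI[of _ 1], rule exI[of _ 0], rule exI[of _ 0], rule exI[of _ 0], rule exI[of _ 0]) simp
  have phi: "\<phi> m = m * \<phi> 1" if m: "m \<in> F9 x y z \<alpha> \<beta>" for m
  proof -
    have 1: "\<phi> ((fps_X^13 * m) * 1) = (fps_X^13 * m) * \<phi> 1" using lin X13 one by blast
    have "fps_X^13 \<in> S2 x y" using X13[of 1] by simp
    then have 2: "\<phi> (fps_X^13 * m) = fps_X^13 * \<phi> m" using lin m by blast
    have "fps_X^13 * \<phi> m = fps_X^13 * (m * \<phi> 1)" using 1 2 by (simp add: mult.assoc)
    then show ?thesis by simp
  qed
  define u where "u = \<phi> 1"
  have "u \<in> F9 x y z \<alpha>' \<beta>'" unfolding u_def using bij one bij_betwE by blast
  then obtain C0 C1 C2 C3 h where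
    u: "u = fps_const C0 * 1 + fps_const C1 * (z + fps_const \<alpha>' * fps_X * z^2 + fps_const \<beta>' * z^3) + fps_const C2 * x + fps_const C3 * y + fps_X^10 * h"
    unfolding F9_iff by blast
  have "1 \<in> F9 x y z \<alpha>' \<beta>'" unfolding F9_iff
    by (rule exI[of _ 1], rule exI[of _ 0], rule exI[of _ 0], rule exI[of _ 0], rule exI[of _ 0]) simp
  then obtain m0 where m0: "m0 \<in> F9 x y z \<alpha> \<beta>" "\<phi> m0 = 1"
    using bij unfolding bij_betw_def by (metis imageE)
  have "m0 * u = 1" using phi[OF m0(1)] m0(2) u_def by simp
  then have "(m0 * u) $ 0 = 1" by simp
  then have "u $ 0 \<noteq> 0" by auto
  moreover have "u $ 0 = C0" unfolding u xd yd zd by (simp add: fps_power_zeroth)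
  ultimately have C0: "C0 \<noteq> 0" by simp
  define W where "W = z + fps_const \<alpha> * fps_X * z^2 + fps_const \<beta> * z^3"
  have "W \<in> F9 x y z \<alpha> \<beta>" unfolding F9_iff W_def
    by (rule exI[of _ 0], rule exI[of _ 1], rule exI[of _ 0], rule exI[of _ 0], rule exI[of _ 0]) simp
  then have "W * u \<in> F9 x y z \<alpha>' \<beta>'" using phi bij bij_betwE u_def by metis
  then obtain D0 D1 D2 D3 r where
    D: "W * u = fps_const D0 * 1 + fps_const D1 * (z + fps_const \<alpha>' * fps_X * z^2 + fps_const \<beta>' * z^3) + fps_const D2 * x + fps_const D3 * y + fps_X^10 * r"
    unfolding F9_iff by blast
  define p where "p = fps_const \<alpha> * c^2 + fps_const \<beta> * fps_X^2 * c^3"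
  define p' where "p' = fps_const \<alpha>' * c^2 + fps_const \<beta>' * fps_X^2 * c^3"
  define Q where "Q = fps_const C1 * (c * (p + p') + fps_X^4 * p * p') + fps_const C2 * fps_X^2 * c^2 * p
     + fps_const C3 * fps_X * c^3 * (c + fps_X^4 * p) + h * W"
  define E where "E = fps_const C1 * (fps_X^6*c^2) + fps_const (C0*(\<alpha>-\<alpha>')) * (fps_X^7*c^2) + fps_const (C0*(\<beta>-\<beta>'))*(fps_X^9*c^3)"
  have id: "W * u = fps_const C0 * (z + fps_const \<alpha>' * fps_X * z^2 + fps_const \<beta>' * z^3) + fps_const C2 * y + E + fps_X^10 * Q"
    unfolding u W_def E_def Q_def p_def p'_def cs unfolding xd yd zd by algebra
  have "fps_const D0 + fps_const (D1-C0) * (fps_X^3*c + fps_const \<alpha>' * (fps_X^7 * c^2) + fps_const \<beta>' * (fps_X^9 * c^3))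
     + fps_const D2 * (fps_X^5 * c^2) + fps_const (D3 - C2) * (fps_X^8 * c^3) + fps_X^10 * (r - Q) = E"
  proof -
    have e: "fps_const D0 * 1 + fps_const D1 * (z + fps_const \<alpha>' * fps_X * z^2 + fps_const \<beta>' * z^3) + fps_const D2 * x + fps_const D3 * y + fps_X^10 * r
      = fps_const C0 * (z + fps_const \<alpha>' * fps_X * z^2 + fps_const \<beta>' * z^3) + fps_const C2 * y + E + fps_X^10 * Q"
      using D id by simp
    show ?thesis using e unfolding cs xd yd zd by algebra
  qed
  then have "C1 = 0 \<and> C0*(\<alpha>-\<alpha>') = 0 \<and> C0*(\<beta>-\<beta>') = 0"
    using coef[of c "c^2" "c^3" D0 "D1-C0" \<alpha>' \<beta>' D2 "D3-C2" "r-Q" C1 "C0*(\<alpha>-\<alpha>')" "C0*(\<beta>-\<beta>')"] c0 unfolding E_def by (simp add: fps_power_zeroth)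
  then show ?thesis using C0 by simp
qed


theorem mainTheorem2:
  fixes x y z :: "'a::alg_closed_field fps"
  assumes "x \<noteq> 0" "subdegree x = 5" "y \<noteq> 0" "subdegree y = 8"
    and "y^2 = fps_X * x^3"
    and "z * x = y"
  shows "(\<forall>\<alpha> \<beta>. \<alpha> \<noteq> 0 \<longrightarrow> is_submodule (S2 x y) (F9 x y z \<alpha> \<beta>))
    \<and> (\<forall>\<alpha> \<beta> \<alpha>' \<beta>'. \<alpha> \<noteq> 0 \<longrightarrow> \<alpha>' \<noteq> 0 \<longrightarrow>
         module_iso (S2 x y) (F9 x y z \<alpha> \<beta>) (F9 x y z \<alpha>' \<beta>') \<longrightarrow> (\<alpha>, \<beta>) = (\<alpha>', \<beta>'))"
proof -
  have z0: "z \<noteq> 0" using assms by auto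
  have sz: "subdegree z = 3" using subdegree_mult[of z x] assms z0 by simp
  define c where "c = fps_shift 3 z"
  have zd: "z = fps_X^3 * c" unfolding c_def using factor[OF z0 sz] .
  have c0: "c $ 0 \<noteq> 0" unfolding c_def using z0 sz nth_subdegree_nonzero[of z] by simp
  have "(z^2 - fps_X * x) * x^2 = 0"
  proof -
    have "(z^2 - fps_X * x) * x^2 = (z*x)^2 - fps_X * x^3" by algebra
    then show ?thesis using assms by simp
  qed
  then have zz: "z^2 = fps_X * x" using assms by simp
  have "fps_X * x = fps_X * (fps_X^5 * c^2)" using zz unfolding zd by algebra
  then have xd: "x = fps_X^5 * c^2" by simp
  have "fps_X^3 * c * (fps_X^5 * c^2) = fps_X^8 * c^3" by algebra
  then have yd: "y = fps_X^8 * c^3" using assms(6) unfolding xd zd by simp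
  show ?thesis using core1[OF xd yd zd] core2[OF xd yd zd c0] by auto
qed

end
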